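(* Let $m$ and $n$ be relatively prime positive integers such that every solvable group of order $mn$ has a normal subgroup of order $m$. Then every left brace of size $mn$ is (isomorphic to) a semidirect product $B_1\rtimes_{\tau} B_2$ of a left brace $B_1$ of size $m$ and a left brace $B_2$ of size $n$, for some group morphism $\tau:(B_2,\cdot)\to\operatorname{Aut}(B_1,+,\cdot)$.
   Context: A (left) brace is a triple $(B,+,\cdot)$ where $(B,+)$ is an abelian group, $(B,\cdot)$ is a group, and $a\cdot(b+c)+a=a\cdot b+a\cdot c$ for all $a,b,c\in B$. Its size is $|B|$. A brace morphism is a map preserving both operations; an isomorphism is a bijective brace morphism. $\operatorname{Aut}(B_1,+,\cdot)$ denotes the group of brace automorphisms of $B_1$. Given braces $B_1,B_2$ and a group morphism $\tau:(B_2,\cdot)\to\operatorname{Aut}(B_1,+,\cdot)$, the semidirect product $B_1\rtimes_\tau B_2$ is the set $B_1\times B_2$ with $(a,b)+(a',b')=(a+a',b+b')$ and $(a,b)\cdot(a',b')=(a\cdot\tau(b)(a'),\,b\cdot b')$; it is a brace. When $\tau$ is trivial it is called the direct product. *)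

theory Defs
  imports "HOL-Algebra.Algebra"
begin

definition is_brace :: "'a monoid \<Rightarrow> 'a monoid \<Rightarrow> bool" where
  "is_brace A M \<longleftrightarrow> comm_group A \<and> group M \<and> carrier M = carrier A \<and>
     (\<forall>a\<in>carrier A. \<forall>b\<in>carrier A. \<forall>c\<in>carrier A.
        (a \<otimes>\<^bsub>M\<^esub> (b \<otimes>\<^bsub>A\<^esub> c)) \<otimes>\<^bsub>A\<^esub> a
          = (a \<otimes>\<^bsub>M\<^esub> b) \<otimes>\<^bsub>A\<^esub> (a \<otimes>\<^bsub>M\<^esub> c))"

definition brace_iso :: "'a monoid \<Rightarrow> 'a monoid \<Rightarrow> 'b monoid \<Rightarrow> 'b monoid \<Rightarrow> ('a \<Rightarrow> 'b) \<Rightarrow> bool" where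
  "brace_iso A M A' M' f \<longleftrightarrow> bij_betw f (carrier A) (carrier A') \<and>
     (\<forall>x\<in>carrier A. \<forall>y\<in>carrier A.
        f (x \<otimes>\<^bsub>A\<^esub> y) = f x \<otimes>\<^bsub>A'\<^esub> f y \<and> f (x \<otimes>\<^bsub>M\<^esub> y) = f x \<otimes>\<^bsub>M'\<^esub> f y)"

text \<open>Brace automorphisms (as maps on the carrier; values outside the carrier are irrelevant).\<close>

definition brace_aut :: "'a monoid \<Rightarrow> 'a monoid \<Rightarrow> ('a \<Rightarrow> 'a) set" where
  "brace_aut A M = {f. brace_iso A M A M f}"

definition brace_action :: "'a monoid \<Rightarrow> 'a monoid \<Rightarrow> 'b monoid \<Rightarrow> ('b \<Rightarrow> 'a \<Rightarrow> 'a) \<Rightarrow> bool" where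
  "brace_action A1 M1 M2 \<tau> \<longleftrightarrow>
     (\<forall>b\<in>carrier M2. \<tau> b \<in> brace_aut A1 M1) \<and>
     (\<forall>b\<in>carrier M2. \<forall>b'\<in>carrier M2. \<forall>x\<in>carrier A1.
        \<tau> (b \<otimes>\<^bsub>M2\<^esub> b') x = \<tau> b (\<tau> b' x))"

definition sdp_add :: "'a monoid \<Rightarrow> 'b monoid \<Rightarrow> ('a \<times> 'b) monoid" where
  "sdp_add A1 A2 = \<lparr> carrier = carrier A1 \<times> carrier A2,
     monoid.mult = (\<lambda>(a, b) (a', b'). (a \<otimes>\<^bsub>A1\<^esub> a', b \<otimes>\<^bsub>A2\<^esub> b')),
     one = (\<one>\<^bsub>A1\<^esub>, \<one>\<^bsub>A2\<^esub>) \<rparr>"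

definition sdp_mul :: "'a monoid \<Rightarrow> 'b monoid \<Rightarrow> ('b \<Rightarrow> 'a \<Rightarrow> 'a) \<Rightarrow> ('a \<times> 'b) monoid" where
  "sdp_mul M1 M2 \<tau> = \<lparr> carrier = carrier M1 \<times> carrier M2,
     monoid.mult = (\<lambda>(a, b) (a', b'). (a \<otimes>\<^bsub>M1\<^esub> \<tau> b a', b \<otimes>\<^bsub>M2\<^esub> b')),
     one = (\<one>\<^bsub>M1\<^esub>, \<one>\<^bsub>M2\<^esub>) \<rparr>"

end

theory Submission
  imports Defs
begin
lemma comm_group_solvable:
  assumes "comm_group G" shows "solvable G"
proof -
  interpret comm_group G by fact
  have "(derived G ^^ 1) (carrier G) = {\<one>\<^bsub>G\<^esub>}" using derived_eq_singleton by simp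
  then show ?thesis unfolding solvable_def
    using trivial_derived_seq_imp_solvable[OF subgroup_self] by blast
qed

lemma hyp_transfer:
  fixes G :: "'c monoid"
  assumes hyp: "\<forall>G :: nat monoid. group G \<and> finite (carrier G) \<and> card (carrier G) = m * n
                 \<and> solvable G \<longrightarrow> (\<exists>N. N \<lhd> G \<and> card N = m)"
    and grp: "group G" and fin: "finite (carrier G)" and cd: "card (carrier G) = m * n"
    and sol: "solvable G"
  shows "\<exists>N. N \<lhd> G \<and> card N = m"
proof -
  interpret group G by fact
  obtain h :: "'c \<Rightarrow> nat" where inj: "inj_on h (carrier G)"
    using finite_imp_inj_to_nat_seg[OF fin] by blast
  define h' where "h' = inv_into (carrier G) h"
  define G' where "G' = \<lparr>carrier = h ` carrier G, monoid.mult = (\<lambda>x y. h (h' x \<otimes>\<^bsub>G\<^esub> h' y)), one = h \<one>\<^bsub>G\<^esub>\<rparr>"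
  have hh': "\<And>x. x \<in> carrier G \<Longrightarrow> h' (h x) = x" unfolding h'_def using inj by simp
  have iso: "h \<in> iso G G'"
    unfolding iso_def hom_def G'_def using inj by (auto simp: hh' bij_betw_def)
  have "group (G'\<lparr>one := h \<one>\<^bsub>G\<^esub>\<rparr>)" using iso_imp_img_group[OF iso] .
  moreover have "G'\<lparr>one := h \<one>\<^bsub>G\<^esub>\<rparr> = G'" unfolding G'_def by simp
  ultimately have g': "group G'" by simp
  have gh: "group_hom G G' h" using iso g' grp unfolding group_hom_def group_hom_axioms_def iso_def by auto
  have sol': "solvable G'"
    using group_hom.surj_hom_imp_solvable[OF gh _ sol] iso unfolding iso_def bij_betw_def by auto
  have "finite (carrier G')" "card (carrier G') = m * n"
    unfolding G'_def using fin cd card_image[OF inj] by auto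
  then obtain N where N: "N \<lhd> G'" "card N = m" using hyp g' sol' by blast
  have iso2: "h' \<in> iso G' G" unfolding h'_def using iso_set_sym[OF iso] .
  have "h' ` N \<lhd> G" using iso_normal_subgroup[OF iso2 g' grp N(1)] .
  moreover have "card (h' ` N) = m"
  proof -
    have "N \<subseteq> carrier G'" using N(1) normal_imp_subgroup subgroup.subset by blast
    moreover have "inj_on h' (carrier G')" using iso2 unfolding iso_def bij_betw_def by auto
    ultimately show ?thesis using card_image N(2) inj_on_subset by metis
  qed
  ultimately show ?thesis by blast
qed

lemma funpow_mod_id:
  assumes "\<And>x. x \<in> S \<Longrightarrow> (f ^^ m) x = x" "\<And>x. x \<in> S \<Longrightarrow> f x \<in> S" "x \<in> S"
  shows "(f ^^ (i mod m)) x = (f ^^ i) x"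
proof -
  have cl: "\<And>k x. x \<in> S \<Longrightarrow> (f ^^ k) x \<in> S"
  proof -
    fix k x assume "x \<in> S" then show "(f ^^ k) x \<in> S" by (induct k) (auto intro: assms(2))
  qed
  have km: "\<And>k x. x \<in> S \<Longrightarrow> (f ^^ (k * m)) x = x"
  proof -
    fix k x assume x: "x \<in> S" show "(f ^^ (k * m)) x = x"
    proof (induct k)
      case 0 then show ?case by simp
    next
      case (Suc k)
      have "(f ^^ (Suc k * m)) x = (f ^^ m) ((f ^^ (k * m)) x)"
        by (simp add: funpow_add)
      then show ?case using Suc assms(1) x by simp
    qed
  qed
  have "(f ^^ i) x = (f ^^ (i mod m)) ((f ^^ ((i div m) * m)) x)"
    by (metis comp_apply funpow_add div_mult_mod_eq add.commute)
  then show ?thesis using km[OF assms(3)] by simp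
qed

lemma sub_card_dvd:
  assumes "group G" "subgroup H G" "subgroup H' G" "H \<subseteq> H'" "finite H'"
  shows "card H dvd card H'"
proof -
  interpret group G by fact
  have "subgroup H (G\<lparr>carrier := H'\<rparr>)" using subgroup_incl assms by blast
  moreover have "group (G\<lparr>carrier := H'\<rparr>)" using subgroup_imp_group assms by blast
  ultimately have "card (rcosets\<^bsub>G\<lparr>carrier := H'\<rparr>\<^esub> H) * card H = order (G\<lparr>carrier := H'\<rparr>)"
    using group.lagrange by blast
  moreover have "order (G\<lparr>carrier := H'\<rparr>) = card H'" by (simp add: order_def)
  ultimately show ?thesis by (metis dvd_triv_right)
qed

lemma trivial_action:
  fixes K :: "'b monoid" and \<phi> :: "'b \<Rightarrow> 'b" and m n :: nat
  assumes hyp: "\<forall>G :: nat monoid. group G \<and> finite (carrier G) \<and> card (carrier G) = m * n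
                 \<and> solvable G \<longrightarrow> (\<exists>N. N \<lhd> G \<and> card N = m)"
    and K: "comm_group K" and finK: "finite (carrier K)" and cardK: "card (carrier K) = n"
    and m0: "m > 0" and cop: "coprime m n"
    and phi_closed: "\<And>x. x \<in> carrier K \<Longrightarrow> \<phi> x \<in> carrier K"
    and phi_hom: "\<And>x y. x \<in> carrier K \<Longrightarrow> y \<in> carrier K \<Longrightarrow> \<phi> (x \<otimes>\<^bsub>K\<^esub> y) = \<phi> x \<otimes>\<^bsub>K\<^esub> \<phi> y"
    and phi_m: "\<And>x. x \<in> carrier K \<Longrightarrow> (\<phi> ^^ m) x = x"
    and x: "x \<in> carrier K"
  shows "\<phi> x = x"
proof (cases "m = 1")
  case True then show ?thesis using phi_m[OF x] by simp
next
  case False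
  then have m2: "1 < m" using m0 by simp
  interpret K: comm_group K by fact
  have cl: "\<And>k x. x \<in> carrier K \<Longrightarrow> (\<phi> ^^ k) x \<in> carrier K"
  proof -
    fix k x assume "x \<in> carrier K" then show "(\<phi> ^^ k) x \<in> carrier K" by (induct k) (auto intro: phi_closed)
  qed
  have hm: "\<And>k x y. x \<in> carrier K \<Longrightarrow> y \<in> carrier K \<Longrightarrow> (\<phi> ^^ k) (x \<otimes>\<^bsub>K\<^esub> y) = (\<phi> ^^ k) x \<otimes>\<^bsub>K\<^esub> (\<phi> ^^ k) y"
  proof -
    fix k x y assume "x \<in> carrier K" "y \<in> carrier K"
    then show "(\<phi> ^^ k) (x \<otimes>\<^bsub>K\<^esub> y) = (\<phi> ^^ k) x \<otimes>\<^bsub>K\<^esub> (\<phi> ^^ k) y"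
      by (induct k) (auto simp: phi_hom cl)
  qed
  have h1: "\<And>k. (\<phi> ^^ k) \<one>\<^bsub>K\<^esub> = \<one>\<^bsub>K\<^esub>"
  proof -
    fix k
    have "(\<phi> ^^ k) \<one>\<^bsub>K\<^esub> \<otimes>\<^bsub>K\<^esub> \<one>\<^bsub>K\<^esub> = (\<phi> ^^ k) \<one>\<^bsub>K\<^esub> \<otimes>\<^bsub>K\<^esub> (\<phi> ^^ k) \<one>\<^bsub>K\<^esub>"
      using hm[of "\<one>\<^bsub>K\<^esub>" "\<one>\<^bsub>K\<^esub>" k] cl by simp
    then show "(\<phi> ^^ k) \<one>\<^bsub>K\<^esub> = \<one>\<^bsub>K\<^esub>"
      using K.l_cancel cl by (metis K.one_closed)
  qed
  have md: "\<And>i x. x \<in> carrier K \<Longrightarrow> (\<phi> ^^ (i mod m)) x = (\<phi> ^^ i) x"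
    using funpow_mod_id[where S="carrier K" and f=\<phi> and m=m] phi_m phi_closed by blast
  have pa: "\<And>i j x. (\<phi> ^^ (i + j)) x = (\<phi> ^^ i) ((\<phi> ^^ j) x)"
    by (simp add: funpow_add)
  define G where "G = \<lparr>carrier = carrier K \<times> {..<m},
     monoid.mult = (\<lambda>(x, i) (y, j). (x \<otimes>\<^bsub>K\<^esub> (\<phi> ^^ i) y, (i + j) mod m)),
     one = (\<one>\<^bsub>K\<^esub>, 0::nat)\<rparr>"
  define Z where "Z = \<lparr>carrier = {..<m}, monoid.mult = (\<lambda>i j. (i + j) mod m), one = (0::nat)\<rparr>"
  have mulG: "(x, i) \<otimes>\<^bsub>G\<^esub> (y, j) = (x \<otimes>\<^bsub>K\<^esub> (\<phi> ^^ i) y, (i + j) mod m)" for x i y j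
    unfolding G_def by simp
  have carG: "carrier G = carrier K \<times> {..<m}" unfolding G_def by simp
  have oneG: "\<one>\<^bsub>G\<^esub> = (\<one>\<^bsub>K\<^esub>, 0)" unfolding G_def by simp
  have grpG: "group G"
  proof (rule groupI)
    fix a b assume "a \<in> carrier G" "b \<in> carrier G"
    then show "a \<otimes>\<^bsub>G\<^esub> b \<in> carrier G" using m0 cl
      by (cases a, cases b) (auto simp: mulG carG)
  next
    show "\<one>\<^bsub>G\<^esub> \<in> carrier G" using m0 by (simp add: oneG carG)
  next
    fix a b c assume "a \<in> carrier G" "b \<in> carrier G" "c \<in> carrier G"
    then obtain x i y j z k where abc: "a = (x, i)" "b = (y, j)" "c = (z, k)"
      "x \<in> carrier K" "y \<in> carrier K" "z \<in> carrier K" "i < m" "j < m" "k < m"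
      by (auto simp: carG)
    have "(\<phi> ^^ ((i + j) mod m)) z = (\<phi> ^^ i) ((\<phi> ^^ j) z)" using md abc pa by simp
    then show "a \<otimes>\<^bsub>G\<^esub> b \<otimes>\<^bsub>G\<^esub> c = a \<otimes>\<^bsub>G\<^esub> (b \<otimes>\<^bsub>G\<^esub> c)"
      using abc by (simp add: mulG hm cl K.m_assoc mod_add_left_eq mod_add_right_eq add.assoc)
  next
    fix a assume "a \<in> carrier G"
    then show "\<one>\<^bsub>G\<^esub> \<otimes>\<^bsub>G\<^esub> a = a" by (cases a) (auto simp: oneG mulG carG)
  next
    fix a assume "a \<in> carrier G"
    then obtain x i where a: "a = (x, i)" "x \<in> carrier K" "i < m" by (auto simp: carG)
    let ?j = "(m - i) mod m"
    let ?b = "((\<phi> ^^ ?j) (inv\<^bsub>K\<^esub> x), ?j)"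
    have "?b \<in> carrier G" using a cl m0 by (simp add: carG)
    moreover have "?b \<otimes>\<^bsub>G\<^esub> a = \<one>\<^bsub>G\<^esub>"
    proof -
      have "(?j + i) mod m = 0" using a(3) by (metis le_add_diff_inverse2 less_imp_le_nat mod_add_left_eq mod_self)
      moreover have "(\<phi> ^^ ?j) (inv\<^bsub>K\<^esub> x) \<otimes>\<^bsub>K\<^esub> (\<phi> ^^ ?j) x = \<one>\<^bsub>K\<^esub>"
        using hm[of "inv\<^bsub>K\<^esub> x" x ?j] a h1 by simp
      ultimately show ?thesis using a by (simp add: mulG oneG)
    qed
    ultimately show "\<exists>b\<in>carrier G. b \<otimes>\<^bsub>G\<^esub> a = \<one>\<^bsub>G\<^esub>" by blast
  qed
  interpret G: group G by (rule grpG)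
  have grpZ: "comm_group Z"
  proof (rule comm_groupI)
    fix a assume "a \<in> carrier Z"
    then have "(m - a) mod m \<in> carrier Z \<and> (m - a) mod m \<otimes>\<^bsub>Z\<^esub> a = \<one>\<^bsub>Z\<^esub>"
      unfolding Z_def using m0 by simp (metis le_add_diff_inverse2 less_imp_le_nat mod_add_left_eq mod_self)
    then show "\<exists>b\<in>carrier Z. b \<otimes>\<^bsub>Z\<^esub> a = \<one>\<^bsub>Z\<^esub>" by blast
  qed (auto simp: Z_def m0 mod_add_left_eq mod_add_right_eq add_ac)
  interpret Z: comm_group Z by (rule grpZ)
  have hsnd: "group_hom G Z snd"
    unfolding group_hom_def group_hom_axioms_def hom_def
    using grpG Z.is_group by (auto simp: carG Z_def mulG)
  interpret hs: group_hom G Z snd by (rule hsnd)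
  define K0 where "K0 = carrier K \<times> {0::nat}"
  have K0sub: "K0 \<subseteq> carrier G" using m0 by (auto simp: K0_def carG)
  have subK0: "subgroup K0 G"
  proof (rule G.subgroupI)
    show "K0 \<subseteq> carrier G" by (rule K0sub)
    show "K0 \<noteq> {}" by (auto simp: K0_def)
  next
    fix a assume a: "a \<in> K0"
    have aG: "a \<in> carrier G" using a K0sub by auto
    have "snd a = \<one>\<^bsub>Z\<^esub>" using a by (auto simp: K0_def Z_def)
    then have "snd (inv\<^bsub>G\<^esub> a) = \<one>\<^bsub>Z\<^esub>" using hs.hom_inv[OF aG] by simp
    then have "snd (inv\<^bsub>G\<^esub> a) = 0" by (simp add: Z_def)
    moreover have "inv\<^bsub>G\<^esub> a \<in> carrier G" using a K0sub by auto
    ultimately show "inv\<^bsub>G\<^esub> a \<in> K0" by (auto simp: K0_def carG)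
  next
    fix a b assume "a \<in> K0" "b \<in> K0" then show "a \<otimes>\<^bsub>G\<^esub> b \<in> K0"
      by (auto simp: K0_def mulG)
  qed
  have commK0: "comm_group (G\<lparr>carrier := K0\<rparr>)"
  proof -
    interpret K0: group "G\<lparr>carrier := K0\<rparr>" using G.subgroup_imp_group[OF subK0] .
    show ?thesis
      by (rule K0.group_comm_groupI) (auto simp: K0_def mulG K.m_comm)
  qed
  have "solvable G"
  proof (rule solvable_condition[OF G.canonical_inj_is_hom[OF subK0] hsnd])
    show "snd ` carrier G = carrier Z" using K.one_closed
      by (auto simp: carG Z_def image_iff) 
    show "kernel G Z snd \<subseteq> id ` carrier (G\<lparr>carrier := K0\<rparr>)"
      by (auto simp: kernel_def K0_def carG Z_def)
    show "solvable (G\<lparr>carrier := K0\<rparr>)" using comm_group_solvable[OF commK0] .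
    show "solvable Z" using comm_group_solvable[OF grpZ] .
  qed
  moreover have "finite (carrier G)" using finK by (simp add: carG)
  moreover have "card (carrier G) = m * n" by (simp add: carG card_cartesian_product cardK)
  ultimately obtain N where N: "N \<lhd> G" "card N = m" using hyp_transfer[OF hyp grpG] by blast
  interpret N: normal N G by (rule N(1))
  have Nsub: "N \<subseteq> carrier G" by (rule N.subset)
  have finN: "finite N" using finite_subset[OF Nsub] \<open>finite (carrier G)\<close> by blast
  have cardK0: "card K0 = n" by (simp add: K0_def card_cartesian_product cardK)
  have finK0: "finite K0" using finK by (simp add: K0_def)
  have subI: "subgroup (N \<inter> K0) G" using G.subgroups_Inter_pair[OF N.subgroup_axioms subK0] .
  have d1: "card (N \<inter> K0) dvd m"
    using sub_card_dvd[OF grpG subI N.subgroup_axioms _ finN] N(2) by simp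
  have d2: "card (N \<inter> K0) dvd n"
    using sub_card_dvd[OF grpG subI subK0 _ finK0] cardK0 by simp
  have "card (N \<inter> K0) = 1" by (rule coprime_common_divisor_nat[OF cop d1 d2])
  moreover have "\<one>\<^bsub>G\<^esub> \<in> N \<inter> K0" using subI subgroup.one_closed by blast
  ultimately have NK: "N \<inter> K0 = {\<one>\<^bsub>G\<^esub>}"
  proof -
    assume c1: "card (N \<inter> K0) = 1" and o1: "\<one>\<^bsub>G\<^esub> \<in> N \<inter> K0"
    from c1 obtain z where "N \<inter> K0 = {z}" by (rule card_1_singletonE)
    with o1 show ?thesis by simp
  qed
  have inK0: "\<And>z. z \<in> carrier G \<Longrightarrow> snd z = 0 \<Longrightarrow> z \<in> K0"
    by (auto simp: carG K0_def)
  have inj: "inj_on snd N"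
  proof (rule inj_onI)
    fix a b assume ab: "a \<in> N" "b \<in> N" "snd a = snd b"
    have aG: "a \<in> carrier G" and bG: "b \<in> carrier G" using ab Nsub by auto
    have "a \<otimes>\<^bsub>G\<^esub> inv\<^bsub>G\<^esub> b \<in> N" using ab by (simp add: N.m_closed N.m_inv_closed)
    moreover have "snd (a \<otimes>\<^bsub>G\<^esub> inv\<^bsub>G\<^esub> b) = \<one>\<^bsub>Z\<^esub>"
      using aG bG ab(3) by (simp add: hs.hom_mult hs.hom_inv)
    moreover have "a \<otimes>\<^bsub>G\<^esub> inv\<^bsub>G\<^esub> b \<in> carrier G" using aG bG by simp
    ultimately have "a \<otimes>\<^bsub>G\<^esub> inv\<^bsub>G\<^esub> b \<in> N \<inter> K0"
      by (auto simp: K0_def carG Z_def)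
    then have "a \<otimes>\<^bsub>G\<^esub> inv\<^bsub>G\<^esub> b = \<one>\<^bsub>G\<^esub>" using NK by blast
    then show "a = b" using aG bG G.inv_equality[of a "inv\<^bsub>G\<^esub> b"] by simp
  qed
  have "snd ` N \<subseteq> {..<m}" using Nsub by (auto simp: carG)
  moreover have "card (snd ` N) = card {..<m}" using card_image[OF inj] N(2) by simp
  ultimately have "snd ` N = {..<m}" by (simp add: card_subset_eq)
  then obtain a where a: "a \<in> N" "snd a = 1" using m2 by (metis imageE lessThan_iff)
  then obtain b where b: "a = (b, 1)" "b \<in> carrier K" using Nsub by (cases a) (auto simp: carG)
  define g where "g = (x, 0::nat)"
  have gG: "g \<in> carrier G" using x m0 by (simp add: g_def carG)
  have aG: "a \<in> carrier G" using a Nsub by auto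
  have "g \<otimes>\<^bsub>G\<^esub> inv\<^bsub>G\<^esub> a \<otimes>\<^bsub>G\<^esub> inv\<^bsub>G\<^esub> g \<in> N"
    using N.inv_op_closed2[OF gG] a(1) N.m_inv_closed by blast
  then have cN: "a \<otimes>\<^bsub>G\<^esub> (g \<otimes>\<^bsub>G\<^esub> inv\<^bsub>G\<^esub> a \<otimes>\<^bsub>G\<^esub> inv\<^bsub>G\<^esub> g) \<in> N"
    using a(1) N.m_closed by blast
  have "snd (a \<otimes>\<^bsub>G\<^esub> (g \<otimes>\<^bsub>G\<^esub> inv\<^bsub>G\<^esub> a \<otimes>\<^bsub>G\<^esub> inv\<^bsub>G\<^esub> g)) = 
      snd a \<otimes>\<^bsub>Z\<^esub> (snd g \<otimes>\<^bsub>Z\<^esub> inv\<^bsub>Z\<^esub> snd a \<otimes>\<^bsub>Z\<^esub> inv\<^bsub>Z\<^esub> snd g)"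
    using aG gG by (simp add: hs.hom_mult hs.hom_inv)
  also have "\<dots> = \<one>\<^bsub>Z\<^esub>"
  proof -
    have "snd g = \<one>\<^bsub>Z\<^esub>" by (simp add: g_def Z_def)
    moreover have "snd a \<in> carrier Z" using hs.hom_closed aG by blast
    ultimately show ?thesis by simp
  qed
  finally have "snd (a \<otimes>\<^bsub>G\<^esub> (g \<otimes>\<^bsub>G\<^esub> inv\<^bsub>G\<^esub> a \<otimes>\<^bsub>G\<^esub> inv\<^bsub>G\<^esub> g)) = 0" by (simp add: Z_def)
  moreover have "a \<otimes>\<^bsub>G\<^esub> (g \<otimes>\<^bsub>G\<^esub> inv\<^bsub>G\<^esub> a \<otimes>\<^bsub>G\<^esub> inv\<^bsub>G\<^esub> g) \<in> carrier G"
    using aG gG by simp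
  ultimately have "a \<otimes>\<^bsub>G\<^esub> (g \<otimes>\<^bsub>G\<^esub> inv\<^bsub>G\<^esub> a \<otimes>\<^bsub>G\<^esub> inv\<^bsub>G\<^esub> g) \<in> N \<inter> K0"
    using cN inK0 by blast
  then have "a \<otimes>\<^bsub>G\<^esub> (g \<otimes>\<^bsub>G\<^esub> inv\<^bsub>G\<^esub> a \<otimes>\<^bsub>G\<^esub> inv\<^bsub>G\<^esub> g) = \<one>\<^bsub>G\<^esub>" using NK by blast
  then have "(a \<otimes>\<^bsub>G\<^esub> g) \<otimes>\<^bsub>G\<^esub> inv\<^bsub>G\<^esub> (g \<otimes>\<^bsub>G\<^esub> a) = \<one>\<^bsub>G\<^esub>"
    using aG gG by (simp add: G.inv_mult_group G.m_assoc)
  then have "a \<otimes>\<^bsub>G\<^esub> g = g \<otimes>\<^bsub>G\<^esub> a"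
    using aG gG G.inv_equality[of "a \<otimes>\<^bsub>G\<^esub> g" "inv\<^bsub>G\<^esub> (g \<otimes>\<^bsub>G\<^esub> a)"] by simp
  then have "b \<otimes>\<^bsub>K\<^esub> \<phi> x = x \<otimes>\<^bsub>K\<^esub> b" using m2 by (simp add: b g_def mulG)
  then have "b \<otimes>\<^bsub>K\<^esub> \<phi> x = b \<otimes>\<^bsub>K\<^esub> x" using b x K.m_comm by simp
  then show ?thesis using b x phi_closed[OF x] K.l_cancel by blast
qed

locale brace_loc =
  fixes A M :: "'a monoid"
  assumes br: "is_brace A M"
begin

sublocale A: comm_group A using br unfolding is_brace_def by auto
sublocale M: group M using br unfolding is_brace_def by auto

lemma carM: "carrier M = carrier A" using br unfolding is_brace_def by auto

lemma ax: "a \<in> carrier A \<Longrightarrow> b \<in> carrier A \<Longrightarrow> c \<in> carrier A \<Longrightarrow>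
   (a \<otimes>\<^bsub>M\<^esub> (b \<otimes>\<^bsub>A\<^esub> c)) \<otimes>\<^bsub>A\<^esub> a = (a \<otimes>\<^bsub>M\<^esub> b) \<otimes>\<^bsub>A\<^esub> (a \<otimes>\<^bsub>M\<^esub> c)"
  using br unfolding is_brace_def by auto

lemma mclosed[simp]: "a \<in> carrier A \<Longrightarrow> b \<in> carrier A \<Longrightarrow> a \<otimes>\<^bsub>M\<^esub> b \<in> carrier A"
  using M.m_closed carM by auto

lemma minv_closed[simp]: "a \<in> carrier A \<Longrightarrow> inv\<^bsub>M\<^esub> a \<in> carrier A"
  using M.inv_closed carM by auto

lemma one_eq: "\<one>\<^bsub>M\<^esub> = \<one>\<^bsub>A\<^esub>"
proof -
  have o: "\<one>\<^bsub>M\<^esub> \<in> carrier A" using carM M.one_closed by auto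
  have "(\<one>\<^bsub>M\<^esub> \<otimes>\<^bsub>M\<^esub> (\<one>\<^bsub>A\<^esub> \<otimes>\<^bsub>A\<^esub> \<one>\<^bsub>A\<^esub>)) \<otimes>\<^bsub>A\<^esub> \<one>\<^bsub>M\<^esub>
     = (\<one>\<^bsub>M\<^esub> \<otimes>\<^bsub>M\<^esub> \<one>\<^bsub>A\<^esub>) \<otimes>\<^bsub>A\<^esub> (\<one>\<^bsub>M\<^esub> \<otimes>\<^bsub>M\<^esub> \<one>\<^bsub>A\<^esub>)"
    using ax[OF o A.one_closed A.one_closed] by simp
  then have "\<one>\<^bsub>A\<^esub> \<otimes>\<^bsub>A\<^esub> \<one>\<^bsub>M\<^esub> = \<one>\<^bsub>A\<^esub> \<otimes>\<^bsub>A\<^esub> \<one>\<^bsub>A\<^esub>"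
    using o carM by simp
  then show ?thesis using o by simp
qed

definition lam :: "'a \<Rightarrow> 'a \<Rightarrow> 'a" where
  "lam a x = inv\<^bsub>A\<^esub> a \<otimes>\<^bsub>A\<^esub> (a \<otimes>\<^bsub>M\<^esub> x)"

lemma lam_closed[simp]: "a \<in> carrier A \<Longrightarrow> x \<in> carrier A \<Longrightarrow> lam a x \<in> carrier A"
  unfolding lam_def by simp

lemma mul_lam: "a \<in> carrier A \<Longrightarrow> x \<in> carrier A \<Longrightarrow> a \<otimes>\<^bsub>M\<^esub> x = a \<otimes>\<^bsub>A\<^esub> lam a x"
  unfolding lam_def by (simp add: A.m_assoc[symmetric])

lemma lam_add: assumes "a \<in> carrier A" "x \<in> carrier A" "y \<in> carrier A"
  shows "lam a (x \<otimes>\<^bsub>A\<^esub> y) = lam a x \<otimes>\<^bsub>A\<^esub> lam a y"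
proof -
  have "a \<otimes>\<^bsub>M\<^esub> (x \<otimes>\<^bsub>A\<^esub> y) = (a \<otimes>\<^bsub>M\<^esub> x) \<otimes>\<^bsub>A\<^esub> (a \<otimes>\<^bsub>M\<^esub> y) \<otimes>\<^bsub>A\<^esub> inv\<^bsub>A\<^esub> a"
    using ax[OF assms] assms by (simp add: A.inv_solve_right)
  then show ?thesis unfolding lam_def using assms by (simp add: A.m_ac)
qed

lemma lam_hom: "a \<in> carrier A \<Longrightarrow> group_hom A A (lam a)"
  unfolding group_hom_def group_hom_axioms_def hom_def
  using lam_add A.is_group by auto

lemma lam_one: "x \<in> carrier A \<Longrightarrow> lam \<one>\<^bsub>A\<^esub> x = x"
  unfolding lam_def using one_eq[symmetric] carM M.l_one by (metis A.inv_one A.l_one mclosed A.one_closed)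

lemma lam_mul: assumes a: "a \<in> carrier A" and b: "b \<in> carrier A" and c: "c \<in> carrier A"
  shows "lam (a \<otimes>\<^bsub>M\<^esub> b) c = lam a (lam b c)"
proof -
  interpret h: group_hom A A "lam a" using lam_hom[OF a] .
  have "lam a (lam b c) = lam a (inv\<^bsub>A\<^esub> b) \<otimes>\<^bsub>A\<^esub> lam a (b \<otimes>\<^bsub>M\<^esub> c)"
    unfolding lam_def[of b] using a b c by (simp add: lam_add)
  also have "\<dots> = inv\<^bsub>A\<^esub> (lam a b) \<otimes>\<^bsub>A\<^esub> lam a (b \<otimes>\<^bsub>M\<^esub> c)" using b by simp
  also have "\<dots> = inv\<^bsub>A\<^esub> (inv\<^bsub>A\<^esub> a \<otimes>\<^bsub>A\<^esub> (a \<otimes>\<^bsub>M\<^esub> b)) \<otimes>\<^bsub>A\<^esub> (inv\<^bsub>A\<^esub> a \<otimes>\<^bsub>A\<^esub> (a \<otimes>\<^bsub>M\<^esub> b \<otimes>\<^bsub>M\<^esub> c))"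
    unfolding lam_def using a b c carM by (simp add: M.m_assoc)
  also have "\<dots> = (a \<otimes>\<^bsub>A\<^esub> inv\<^bsub>A\<^esub> a) \<otimes>\<^bsub>A\<^esub> (inv\<^bsub>A\<^esub> (a \<otimes>\<^bsub>M\<^esub> b) \<otimes>\<^bsub>A\<^esub> (a \<otimes>\<^bsub>M\<^esub> b \<otimes>\<^bsub>M\<^esub> c))"
    using a b c by (simp add: A.inv_mult A.m_ac) (simp add: A.m_assoc[symmetric])
  also have "\<dots> = lam (a \<otimes>\<^bsub>M\<^esub> b) c" unfolding lam_def using a b c by (simp add: A.m_assoc[symmetric])
  finally show ?thesis by simp
qed

lemma lam_pow: "a \<in> carrier A \<Longrightarrow> x \<in> carrier A \<Longrightarrow> lam a (x [^]\<^bsub>A\<^esub> (k::nat)) = (lam a x) [^]\<^bsub>A\<^esub> k"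
  using group_hom.hom_nat_pow[OF lam_hom] by blast

lemma lam_minv: "a \<in> carrier A \<Longrightarrow> inv\<^bsub>M\<^esub> a = inv\<^bsub>A\<^esub> (lam (inv\<^bsub>M\<^esub> a) a)"
proof -
  assume a: "a \<in> carrier A"
  have "inv\<^bsub>M\<^esub> a \<otimes>\<^bsub>M\<^esub> a = \<one>\<^bsub>A\<^esub>" using a carM one_eq by simp
  then have "lam (inv\<^bsub>M\<^esub> a) a = inv\<^bsub>A\<^esub> (inv\<^bsub>M\<^esub> a)" unfolding lam_def using a by simp
  then show ?thesis using a by simp
qed

definition Bs :: "nat \<Rightarrow> 'a set" where
  "Bs k = {x \<in> carrier A. x [^]\<^bsub>A\<^esub> k = \<one>\<^bsub>A\<^esub>}"

lemma Bs_sub_A: "subgroup (Bs k) A"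
proof (rule A.subgroupI)
  show "Bs k \<subseteq> carrier A" by (auto simp: Bs_def)
  show "Bs k \<noteq> {}" using A.one_closed by (auto simp: Bs_def)
next
  fix x assume "x \<in> Bs k" then show "inv\<^bsub>A\<^esub> x \<in> Bs k" by (simp add: Bs_def A.nat_pow_inv)
next
  fix x y assume "x \<in> Bs k" "y \<in> Bs k" then show "x \<otimes>\<^bsub>A\<^esub> y \<in> Bs k" by (simp add: Bs_def A.nat_pow_distrib)
qed

lemma lam_Bs: "a \<in> carrier A \<Longrightarrow> x \<in> Bs k \<Longrightarrow> lam a x \<in> Bs k"
  unfolding Bs_def using lam_pow[symmetric] group_hom.hom_one[OF lam_hom] by auto

lemma Bs_sub_M: "subgroup (Bs k) M"
proof (rule M.subgroupI)
  show "Bs k \<subseteq> carrier M" using carM by (auto simp: Bs_def)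
  show "Bs k \<noteq> {}" using A.one_closed by (auto simp: Bs_def)
next
  fix x assume x: "x \<in> Bs k"
  then have xA: "x \<in> carrier A" by (simp add: Bs_def)
  have "lam (inv\<^bsub>M\<^esub> x) x \<in> Bs k" using lam_Bs x xA by simp
  then have "inv\<^bsub>A\<^esub> (lam (inv\<^bsub>M\<^esub> x) x) \<in> Bs k" using subgroup.m_inv_closed[OF Bs_sub_A] by blast
  then show "inv\<^bsub>M\<^esub> x \<in> Bs k" using lam_minv[OF xA] by simp
next
  fix x y assume "x \<in> Bs k" "y \<in> Bs k" then show "x \<otimes>\<^bsub>M\<^esub> y \<in> Bs k"
    using mul_lam lam_Bs subgroup.m_closed[OF Bs_sub_A] by (simp add: Bs_def)
qed

lemma sub_brace: "is_brace (A\<lparr>carrier := Bs k\<rparr>) (M\<lparr>carrier := Bs k\<rparr>)"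
proof -
  interpret G1: group "A\<lparr>carrier := Bs k\<rparr>" using A.subgroup_imp_group[OF Bs_sub_A] .
  have "comm_group (A\<lparr>carrier := Bs k\<rparr>)"
    by (rule G1.group_comm_groupI) (auto simp: Bs_def A.m_comm)
  moreover have "group (M\<lparr>carrier := Bs k\<rparr>)" using M.subgroup_imp_group[OF Bs_sub_M] .
  ultimately show ?thesis unfolding is_brace_def using ax by (auto simp: Bs_def)
qed

end

lemma (in group) pow_dvd_one:
  "x \<in> carrier G \<Longrightarrow> x [^] (d::nat) = \<one> \<Longrightarrow> d dvd k \<Longrightarrow> x [^] k = \<one>"
  using pow_eq_id by (meson dvd_trans)

lemma (in group) pow_coprime_one:
  assumes "x \<in> carrier G" "x [^] (a::nat) = \<one>" "x [^] (b::nat) = \<one>" "coprime a b"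
  shows "x = \<one>"
proof -
  have "ord x dvd a" "ord x dvd b" using assms pow_eq_id by auto
  then have "ord x = 1" using coprime_common_divisor_nat assms(4) by blast
  then show ?thesis using ord_eq_1 assms(1) by simp
qed

locale brace_fin = brace_loc +
  fixes m n :: nat
  assumes m0: "m > 0" and n0: "n > 0" and cop: "coprime m n"
    and fin: "finite (carrier A)" and cardA: "card (carrier A) = m * n"
begin

lemma powmn: "x \<in> carrier A \<Longrightarrow> x [^]\<^bsub>A\<^esub> (m * n) = \<one>\<^bsub>A\<^esub>"
  using A.pow_order_eq_1 cardA by (simp add: order_def)

definition e1 where "e1 = n * (SOME u. \<exists>v. n * u = m * v + 1)"
definition e2 where "e2 = m * (SOME u. \<exists>v. m * u = n * v + 1)"

lemma e1_prop: "\<exists>Y. e1 = m * Y + 1"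
proof -
  have "\<exists>u v. n * u = m * v + gcd n m" using bezout_nat n0 by simp
  then have "\<exists>u v. n * u = m * v + 1" using cop by (simp add: coprime_iff_gcd_eq_1 gcd.commute)
  then have "\<exists>Y. n * (SOME u. \<exists>v. n * u = m * v + 1) = m * Y + 1" by (rule someI_ex)
  then show ?thesis unfolding e1_def .
qed

lemma e2_prop: "\<exists>Y. e2 = n * Y + 1"
proof -
  have "\<exists>u v. m * u = n * v + gcd m n" using bezout_nat m0 by simp
  then have "\<exists>u v. m * u = n * v + 1" using cop by (simp add: coprime_iff_gcd_eq_1)
  then have "\<exists>Y. m * (SOME u. \<exists>v. m * u = n * v + 1) = n * Y + 1" by (rule someI_ex)
  then show ?thesis unfolding e2_def .
qed

lemma pow_mod_one: "x \<in> carrier A \<Longrightarrow> x [^]\<^bsub>A\<^esub> (d::nat) = \<one>\<^bsub>A\<^esub> \<Longrightarrow> k = d * Y + 1 \<Longrightarrow> x [^]\<^bsub>A\<^esub> k = x"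
proof -
  assume x: "x \<in> carrier A" and d: "x [^]\<^bsub>A\<^esub> d = \<one>\<^bsub>A\<^esub>" and k: "k = d * Y + 1"
  have "x [^]\<^bsub>A\<^esub> (d * Y) = \<one>\<^bsub>A\<^esub>" using A.pow_dvd_one[OF x d] by simp
  then show ?thesis using A.nat_pow_mult[OF x, of "d * Y" 1, symmetric] x k by simp
qed

lemma Bm_e1: "a \<in> Bs m \<Longrightarrow> a [^]\<^bsub>A\<^esub> e1 = a"
  using e1_prop pow_mod_one by (auto simp: Bs_def)
lemma Bn_e2: "a \<in> Bs n \<Longrightarrow> a [^]\<^bsub>A\<^esub> e2 = a"
  using e2_prop pow_mod_one by (auto simp: Bs_def)
lemma Bn_e1: "a \<in> Bs n \<Longrightarrow> a [^]\<^bsub>A\<^esub> e1 = \<one>\<^bsub>A\<^esub>"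
  using A.pow_dvd_one[of a n e1] by (auto simp: Bs_def e1_def)
lemma Bm_e2: "a \<in> Bs m \<Longrightarrow> a [^]\<^bsub>A\<^esub> e2 = \<one>\<^bsub>A\<^esub>"
  using A.pow_dvd_one[of a m e2] by (auto simp: Bs_def e2_def)

lemma e1_Bm: "x \<in> carrier A \<Longrightarrow> x [^]\<^bsub>A\<^esub> e1 \<in> Bs m"
proof -
  assume x: "x \<in> carrier A"
  have "(x [^]\<^bsub>A\<^esub> e1) [^]\<^bsub>A\<^esub> m = x [^]\<^bsub>A\<^esub> (e1 * m)" using A.nat_pow_pow[OF x] by simp
  also have "\<dots> = \<one>\<^bsub>A\<^esub>" using A.pow_dvd_one[OF x powmn[OF x]] by (simp add: e1_def)
  finally show ?thesis using x by (simp add: Bs_def)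
qed

lemma e2_Bn: "x \<in> carrier A \<Longrightarrow> x [^]\<^bsub>A\<^esub> e2 \<in> Bs n"
proof -
  assume x: "x \<in> carrier A"
  have "(x [^]\<^bsub>A\<^esub> e2) [^]\<^bsub>A\<^esub> n = x [^]\<^bsub>A\<^esub> (e2 * n)" using A.nat_pow_pow[OF x] by simp
  also have "\<dots> = \<one>\<^bsub>A\<^esub>" using A.pow_dvd_one[OF x powmn[OF x]] by (simp add: e2_def)
  finally show ?thesis using x by (simp add: Bs_def)
qed

lemma e12: "x \<in> carrier A \<Longrightarrow> x [^]\<^bsub>A\<^esub> e1 \<otimes>\<^bsub>A\<^esub> x [^]\<^bsub>A\<^esub> e2 = x"
proof -
  assume x: "x \<in> carrier A"
  obtain Y where Y: "e1 = m * Y + 1" using e1_prop by blast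
  obtain Y' where Y': "e2 = n * Y' + 1" using e2_prop by blast
  obtain q where X: "e1 = n * q" using e1_def by blast
  obtain q' where X': "e2 = m * q'" using e2_def by blast
  have eq1: "e1 + e2 - 1 = m * (Y + q')" using Y X' by (simp add: algebra_simps)
  have eq2: "e1 + e2 - 1 = n * (q + Y')" using X Y' by (simp add: algebra_simps)
  have "m dvd (e1 + e2 - 1)" unfolding eq1 by simp
  moreover have "n dvd (e1 + e2 - 1)" unfolding eq2 by simp
  ultimately have d: "m * n dvd (e1 + e2 - 1)" using divides_mult cop by blast
  then obtain t where t: "e1 + e2 - 1 = (m * n) * t" by (auto elim!: dvdE)
  have "e1 + e2 = (m * n) * t + 1" using t Y by simp
  then have "x [^]\<^bsub>A\<^esub> (e1 + e2) = x" using pow_mod_one[OF x powmn[OF x]] by blast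
  then show ?thesis using A.nat_pow_mult[OF x] by simp
qed

end

context brace_fin begin

lemma finBs: "finite (Bs k)" using fin by (rule finite_subset[rotated]) (auto simp: Bs_def)

lemma Bs_A: "x \<in> Bs k \<Longrightarrow> x \<in> carrier A" by (simp add: Bs_def)

lemma BmBn_one: "x \<in> Bs m \<Longrightarrow> x \<in> Bs n \<Longrightarrow> x = \<one>\<^bsub>A\<^esub>"
  using A.pow_coprime_one[OF _ _ _ cop] by (auto simp: Bs_def)

definition ff :: "'a \<Rightarrow> 'a \<times> 'a" where "ff x = (x [^]\<^bsub>A\<^esub> e1, x [^]\<^bsub>A\<^esub> e2)"
definition gg :: "'a \<times> 'a \<Rightarrow> 'a" where "gg p = fst p \<otimes>\<^bsub>A\<^esub> snd p"

lemma ff_gg: "a \<in> Bs m \<Longrightarrow> b \<in> Bs n \<Longrightarrow> ff (gg (a, b)) = (a, b)"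
  unfolding ff_def gg_def using Bs_A
  by (simp add: A.nat_pow_distrib Bm_e1 Bm_e2 Bn_e1 Bn_e2)

lemma gg_ff: "x \<in> carrier A \<Longrightarrow> gg (ff x) = x"
  unfolding ff_def gg_def using e12 by simp

lemma bij_ff: "bij_betw ff (carrier A) (Bs m \<times> Bs n)"
proof (rule bij_betw_byWitness[where f' = gg])
  show "\<forall>a\<in>carrier A. gg (ff a) = a" using gg_ff by blast
  show "\<forall>a'\<in>Bs m \<times> Bs n. ff (gg a') = a'" using ff_gg by auto
  show "ff ` carrier A \<subseteq> Bs m \<times> Bs n" using e1_Bm e2_Bn by (auto simp: ff_def)
  show "gg ` (Bs m \<times> Bs n) \<subseteq> carrier A" using Bs_A by (auto simp: gg_def)
qed

lemma card_prod: "card (Bs m) * card (Bs n) = m * n"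
  using bij_betw_same_card[OF bij_ff] cardA by (simp add: card_cartesian_product)

lemma coprime_card:
  assumes kl: "coprime k l"
  shows "coprime (card (Bs k)) l"
proof (rule ccontr)
  assume nc: "\<not> coprime (card (Bs k)) l"
  then have "gcd (card (Bs k)) l \<noteq> 1" by (simp add: coprime_iff_gcd_eq_1)
  then obtain p where p: "Factorial_Ring.prime p" "p dvd gcd (card (Bs k)) l" using prime_factor_nat by blast
  then have pk: "p dvd card (Bs k)" and pl: "p dvd l" by auto
  interpret G1: group "A\<lparr>carrier := Bs k\<rparr>" using A.subgroup_imp_group[OF Bs_sub_A] .
  have "order (A\<lparr>carrier := Bs k\<rparr>) = p ^ 1 * (card (Bs k) div p)"
    using pk by (simp add: order_def)
  then obtain H where H: "subgroup H (A\<lparr>carrier := Bs k\<rparr>)" "card H = p"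
    using sylow_thm[OF p(1) G1.is_group] finBs by fastforce
  have Hk: "H \<subseteq> Bs k" using subgroup.subset[OF H(1)] by simp
  have p2: "p \<ge> 2" using p(1) prime_ge_2_nat by blast
  have "\<not> H \<subseteq> {\<one>\<^bsub>A\<^esub>}"
  proof
    assume "H \<subseteq> {\<one>\<^bsub>A\<^esub>}"
    then have "card H \<le> 1" using card_mono[of "{\<one>\<^bsub>A\<^esub>}" H] by simp
    then show False using H(2) p2 by simp
  qed
  then obtain x where x: "x \<in> H" "x \<noteq> \<one>\<^bsub>A\<^esub>" by blast
  have grpH: "group (A\<lparr>carrier := H\<rparr>)" using G1.subgroup_imp_group[OF H(1)] by simp
  have "x [^]\<^bsub>A\<lparr>carrier := H\<rparr>\<^esub> (order (A\<lparr>carrier := H\<rparr>)) = \<one>\<^bsub>A\<lparr>carrier := H\<rparr>\<^esub>"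
    using group.pow_order_eq_1[OF grpH] x(1) by simp
  then have xp: "x [^]\<^bsub>A\<^esub> p = \<one>\<^bsub>A\<^esub>" using H(2) A.nat_pow_consistent[of x p H] by (simp add: order_def)
  have xk: "x [^]\<^bsub>A\<^esub> k = \<one>\<^bsub>A\<^esub>" using x(1) Hk by (auto simp: Bs_def)
  have "coprime k p" using kl pl by (metis coprime_mult_right_iff dvd_def)
  then have "x = \<one>\<^bsub>A\<^esub>" using A.pow_coprime_one[OF _ xk xp] x(1) Hk Bs_A by blast
  then show False using x(2) by simp
qed

lemma card_Bm: "card (Bs m) = m" and card_Bn: "card (Bs n) = n"
proof -
  have c1: "coprime (card (Bs m)) n" using coprime_card[OF cop] .
  have c2: "coprime (card (Bs n)) m" using coprime_card cop by (simp add: coprime_commute)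
  have "card (Bs m) dvd m * n" using card_prod by (metis dvd_triv_left)
  then have d1: "card (Bs m) dvd m" using c1 coprime_dvd_mult_left_iff by blast
  have "card (Bs n) dvd n * m" using card_prod by (metis dvd_triv_right mult.commute)
  then have d2: "card (Bs n) dvd n" using c2 coprime_dvd_mult_left_iff by blast
  have l1: "card (Bs m) \<le> m" using d1 m0 dvd_imp_le by blast
  have l2: "card (Bs n) \<le> n" using d2 n0 dvd_imp_le by blast
  have cp: "card (Bs m) * card (Bs n) = m * n" by (rule card_prod)
  have "card (Bs m) * card (Bs n) > 0" using cp m0 n0 by simp
  then have pos1: "card (Bs m) > 0" and pos2: "card (Bs n) > 0" by (simp_all add: nat_0_less_mult_iff)
  show e1: "card (Bs m) = m"
  proof (rule ccontr)
    assume "card (Bs m) \<noteq> m"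
    then have "card (Bs m) < m" using l1 by simp
    then have "card (Bs m) * card (Bs n) < m * card (Bs n)" using pos2 by simp
    also have "\<dots> \<le> m * n" using l2 by simp
    finally show False using cp by simp
  qed
  show "card (Bs n) = n" using cp e1 m0 by simp
qed

end

context brace_fin begin

lemma Mpow_closed: "a \<in> carrier A \<Longrightarrow> a [^]\<^bsub>M\<^esub> (k::nat) \<in> carrier A"
  using M.nat_pow_closed carM by auto

lemma funpow_lam: "a \<in> carrier A \<Longrightarrow> x \<in> carrier A \<Longrightarrow> (lam a ^^ k) x = lam (a [^]\<^bsub>M\<^esub> k) x"
proof (induct k)
  case 0 then show ?case using lam_one one_eq by simp
next
  case (Suc k)
  have "(lam a ^^ Suc k) x = lam a (lam (a [^]\<^bsub>M\<^esub> k) x)" using Suc by simp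
  also have "\<dots> = lam (a \<otimes>\<^bsub>M\<^esub> a [^]\<^bsub>M\<^esub> k) x" using lam_mul[OF Suc(2) Mpow_closed[OF Suc(2)] Suc(3)] by simp
  also have "\<dots> = lam (a [^]\<^bsub>M\<^esub> Suc k) x" using M.nat_pow_Suc2[of a k] Suc(2) carM by simp
  finally show ?case .
qed

lemma am_one: "a \<in> Bs m \<Longrightarrow> a [^]\<^bsub>M\<^esub> m = \<one>\<^bsub>M\<^esub>"
proof -
  assume a: "a \<in> Bs m"
  have grp: "group (M\<lparr>carrier := Bs m\<rparr>)" using M.subgroup_imp_group[OF Bs_sub_M] .
  have "a [^]\<^bsub>M\<lparr>carrier := Bs m\<rparr>\<^esub> (order (M\<lparr>carrier := Bs m\<rparr>)) = \<one>\<^bsub>M\<lparr>carrier := Bs m\<rparr>\<^esub>"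
    using group.pow_order_eq_1[OF grp] a by simp
  then show ?thesis using card_Bm M.nat_pow_consistent[of a m "Bs m"] by (simp add: order_def)
qed

lemma key:
  assumes hyp: "\<forall>G :: nat monoid. group G \<and> finite (carrier G) \<and> card (carrier G) = m * n
                 \<and> solvable G \<longrightarrow> (\<exists>N. N \<lhd> G \<and> card N = m)"
    and a: "a \<in> Bs m" and b: "b \<in> Bs n"
  shows "lam a b = b"
proof (rule trivial_action[OF hyp, of "A\<lparr>carrier := Bs n\<rparr>" "lam a"])
  show "comm_group (A\<lparr>carrier := Bs n\<rparr>)" using sub_brace[of n] unfolding is_brace_def by blast
  show "finite (carrier (A\<lparr>carrier := Bs n\<rparr>))" using finBs by simp
  show "card (carrier (A\<lparr>carrier := Bs n\<rparr>)) = n" using card_Bn by simp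
  show "0 < m" by (rule m0)
  show "coprime m n" by (rule cop)
  show "b \<in> carrier (A\<lparr>carrier := Bs n\<rparr>)" using b by simp
  have aA: "a \<in> carrier A" using a Bs_A by blast
  show "\<And>x. x \<in> carrier (A\<lparr>carrier := Bs n\<rparr>) \<Longrightarrow> lam a x \<in> carrier (A\<lparr>carrier := Bs n\<rparr>)"
    using lam_Bs[OF aA] by simp
  show "\<And>x y. x \<in> carrier (A\<lparr>carrier := Bs n\<rparr>) \<Longrightarrow> y \<in> carrier (A\<lparr>carrier := Bs n\<rparr>) \<Longrightarrow>
      lam a (x \<otimes>\<^bsub>A\<lparr>carrier := Bs n\<rparr>\<^esub> y) = lam a x \<otimes>\<^bsub>A\<lparr>carrier := Bs n\<rparr>\<^esub> lam a y"
    using lam_add[OF aA] Bs_A by simp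
  show "\<And>x. x \<in> carrier (A\<lparr>carrier := Bs n\<rparr>) \<Longrightarrow> (lam a ^^ m) x = x"
  proof -
    fix x assume "x \<in> carrier (A\<lparr>carrier := Bs n\<rparr>)"
    then have x: "x \<in> carrier A" using Bs_A by simp
    show "(lam a ^^ m) x = x" using funpow_lam[OF aA x] am_one[OF a] one_eq lam_one[OF x] by simp
  qed
qed

end

context brace_fin begin

context
  assumes hyp: "\<forall>G :: nat monoid. group G \<and> finite (carrier G) \<and> card (carrier G) = m * n
                 \<and> solvable G \<longrightarrow> (\<exists>N. N \<lhd> G \<and> card N = m)"
begin

lemma mul_sum: "a \<in> Bs m \<Longrightarrow> b \<in> Bs n \<Longrightarrow> a \<otimes>\<^bsub>M\<^esub> b = a \<otimes>\<^bsub>A\<^esub> b"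
  using mul_lam[of a b] key[OF hyp] Bs_A by simp

lemma comm: "a \<in> Bs m \<Longrightarrow> b \<in> Bs n \<Longrightarrow> b \<otimes>\<^bsub>M\<^esub> a = lam b a \<otimes>\<^bsub>M\<^esub> b"
proof -
  assume a: "a \<in> Bs m" and b: "b \<in> Bs n"
  have la: "lam b a \<in> Bs m" using lam_Bs a b Bs_A by blast
  have "lam b a \<otimes>\<^bsub>M\<^esub> b = lam b a \<otimes>\<^bsub>A\<^esub> b" using mul_sum[OF la b] .
  moreover have "b \<otimes>\<^bsub>M\<^esub> a = b \<otimes>\<^bsub>A\<^esub> lam b a" using mul_lam a b Bs_A by blast
  ultimately show ?thesis using A.m_comm la b Bs_A by metis
qed

lemma lam_mhom: assumes b: "b \<in> Bs n" and x: "x \<in> Bs m" and y: "y \<in> Bs m"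
  shows "lam b (x \<otimes>\<^bsub>M\<^esub> y) = lam b x \<otimes>\<^bsub>M\<^esub> lam b y"
proof -
  have bA: "b \<in> carrier A" and xA: "x \<in> carrier A" and yA: "y \<in> carrier A" using b x y Bs_A by auto
  have xy: "x \<otimes>\<^bsub>M\<^esub> y \<in> Bs m" using subgroup.m_closed[OF Bs_sub_M] x y by blast
  have lx: "lam b x \<in> carrier A" and ly: "lam b y \<in> carrier A" using bA xA yA by auto
  have "lam b (x \<otimes>\<^bsub>M\<^esub> y) \<otimes>\<^bsub>M\<^esub> b = b \<otimes>\<^bsub>M\<^esub> (x \<otimes>\<^bsub>M\<^esub> y)" using comm[OF xy b] by simp
  also have "\<dots> = (b \<otimes>\<^bsub>M\<^esub> x) \<otimes>\<^bsub>M\<^esub> y" using bA xA yA carM M.m_assoc by simp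
  also have "\<dots> = (lam b x \<otimes>\<^bsub>M\<^esub> b) \<otimes>\<^bsub>M\<^esub> y" using comm[OF x b] by simp
  also have "\<dots> = lam b x \<otimes>\<^bsub>M\<^esub> (b \<otimes>\<^bsub>M\<^esub> y)" using bA lx yA carM M.m_assoc by simp
  also have "\<dots> = lam b x \<otimes>\<^bsub>M\<^esub> (lam b y \<otimes>\<^bsub>M\<^esub> b)" using comm[OF y b] by simp
  also have "\<dots> = (lam b x \<otimes>\<^bsub>M\<^esub> lam b y) \<otimes>\<^bsub>M\<^esub> b" using bA lx ly carM M.m_assoc by simp
  finally show ?thesis using M.r_cancel bA lx ly xA yA carM by (metis lam_closed mclosed)
qed

lemma lam_inv: "b \<in> carrier A \<Longrightarrow> x \<in> carrier A \<Longrightarrow> lam (inv\<^bsub>M\<^esub> b) (lam b x) = x"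
  using lam_mul[of "inv\<^bsub>M\<^esub> b" b x, symmetric] M.l_inv carM one_eq lam_one by simp

lemma lam_inv2: "b \<in> carrier A \<Longrightarrow> x \<in> carrier A \<Longrightarrow> lam b (lam (inv\<^bsub>M\<^esub> b) x) = x"
  using lam_mul[of b "inv\<^bsub>M\<^esub> b" x, symmetric] M.r_inv carM one_eq lam_one by simp

lemma action: "brace_action (A\<lparr>carrier := Bs m\<rparr>) (M\<lparr>carrier := Bs m\<rparr>) (M\<lparr>carrier := Bs n\<rparr>) lam"
proof -
  have P1: "lam b \<in> brace_aut (A\<lparr>carrier := Bs m\<rparr>) (M\<lparr>carrier := Bs m\<rparr>)" if bn: "b \<in> Bs n" for b
  proof -
    have bA: "b \<in> carrier A" using bn Bs_A by auto
    have ib: "inv\<^bsub>M\<^esub> b \<in> carrier A" using bA by simp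
    have bij: "bij_betw (lam b) (Bs m) (Bs m)"
      using lam_inv[OF bA] lam_inv2[OF bA] lam_Bs[OF bA] lam_Bs[OF ib] Bs_A
      by (auto intro!: bij_betw_byWitness[where f'="lam (inv\<^bsub>M\<^esub> b)"])
    have ops: "\<forall>x\<in>Bs m. \<forall>y\<in>Bs m. lam b (x \<otimes>\<^bsub>A\<^esub> y) = lam b x \<otimes>\<^bsub>A\<^esub> lam b y \<and>
          lam b (x \<otimes>\<^bsub>M\<^esub> y) = lam b x \<otimes>\<^bsub>M\<^esub> lam b y"
      using lam_add[OF bA] lam_mhom[OF bn] Bs_A by simp
    show ?thesis unfolding brace_aut_def brace_iso_def using bij ops by simp
  qed
  have P2: "lam (b \<otimes>\<^bsub>M\<^esub> b') x = lam b (lam b' x)" if "b \<in> Bs n" "b' \<in> Bs n" "x \<in> Bs m" for b b' x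
    using lam_mul Bs_A that by simp
  show ?thesis unfolding brace_action_def using P1 P2 by simp
qed

lemma ff_mul: assumes x: "x \<in> carrier A" and y: "y \<in> carrier A"
  shows "ff (x \<otimes>\<^bsub>M\<^esub> y) = (x [^]\<^bsub>A\<^esub> e1 \<otimes>\<^bsub>M\<^esub> lam (x [^]\<^bsub>A\<^esub> e2) (y [^]\<^bsub>A\<^esub> e1),
                             x [^]\<^bsub>A\<^esub> e2 \<otimes>\<^bsub>M\<^esub> y [^]\<^bsub>A\<^esub> e2)"
proof -
  define a where "a = x [^]\<^bsub>A\<^esub> e1"
  define b where "b = x [^]\<^bsub>A\<^esub> e2"
  define a' where "a' = y [^]\<^bsub>A\<^esub> e1"
  define b' where "b' = y [^]\<^bsub>A\<^esub> e2"
  have a: "a \<in> Bs m" and a': "a' \<in> Bs m" using e1_Bm x y by (auto simp: a_def a'_def)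
  have b: "b \<in> Bs n" and b': "b' \<in> Bs n" using e2_Bn x y by (auto simp: b_def b'_def)
  have aA: "a \<in> carrier A" and a'A: "a' \<in> carrier A" and bA: "b \<in> carrier A" and b'A: "b' \<in> carrier A"
    using a a' b b' Bs_A by auto
  have lba: "lam b a' \<in> Bs m" using lam_Bs[OF bA a'] .
  then have lbaA: "lam b a' \<in> carrier A" using Bs_A by blast
  have xe: "x = a \<otimes>\<^bsub>M\<^esub> b" using mul_sum[OF a b] gg_ff[OF x] by (simp add: gg_def ff_def a_def b_def)
  have ye: "y = a' \<otimes>\<^bsub>M\<^esub> b'" using mul_sum[OF a' b'] gg_ff[OF y] by (simp add: gg_def ff_def a'_def b'_def)
  have "x \<otimes>\<^bsub>M\<^esub> y = a \<otimes>\<^bsub>M\<^esub> (b \<otimes>\<^bsub>M\<^esub> a') \<otimes>\<^bsub>M\<^esub> b'"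
    using xe ye aA bA a'A b'A carM M.m_assoc by simp
  also have "\<dots> = a \<otimes>\<^bsub>M\<^esub> (lam b a' \<otimes>\<^bsub>M\<^esub> b) \<otimes>\<^bsub>M\<^esub> b'" using comm[OF a' b] by simp
  also have "\<dots> = (a \<otimes>\<^bsub>M\<^esub> lam b a') \<otimes>\<^bsub>M\<^esub> (b \<otimes>\<^bsub>M\<^esub> b')"
    using aA bA lbaA b'A carM M.m_assoc by simp
  finally have eq: "x \<otimes>\<^bsub>M\<^esub> y = (a \<otimes>\<^bsub>M\<^esub> lam b a') \<otimes>\<^bsub>M\<^esub> (b \<otimes>\<^bsub>M\<^esub> b')" .
  have u: "a \<otimes>\<^bsub>M\<^esub> lam b a' \<in> Bs m" using subgroup.m_closed[OF Bs_sub_M] a lba by blast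
  have v: "b \<otimes>\<^bsub>M\<^esub> b' \<in> Bs n" using subgroup.m_closed[OF Bs_sub_M] b b' by blast
  have "ff (x \<otimes>\<^bsub>M\<^esub> y) = ff (gg (a \<otimes>\<^bsub>M\<^esub> lam b a', b \<otimes>\<^bsub>M\<^esub> b'))"
    unfolding eq using mul_sum[OF u v] by (simp add: gg_def)
  also have "\<dots> = (a \<otimes>\<^bsub>M\<^esub> lam b a', b \<otimes>\<^bsub>M\<^esub> b')" using ff_gg[OF u v] .
  finally show ?thesis by (simp add: a_def b_def a'_def b'_def)
qed

lemma result:
  "\<exists>(A1 :: 'a monoid) M1 (A2 :: 'a monoid) M2 \<tau> f.
           is_brace A1 M1 \<and> finite (carrier A1) \<and> card (carrier A1) = m \<and>
           is_brace A2 M2 \<and> finite (carrier A2) \<and> card (carrier A2) = n \<and>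
           brace_action A1 M1 M2 \<tau> \<and>
           brace_iso A M (sdp_add A1 A2) (sdp_mul M1 M2 \<tau>) f"
proof (intro exI conjI)
  show "is_brace (A\<lparr>carrier := Bs m\<rparr>) (M\<lparr>carrier := Bs m\<rparr>)" by (rule sub_brace)
  show "is_brace (A\<lparr>carrier := Bs n\<rparr>) (M\<lparr>carrier := Bs n\<rparr>)" by (rule sub_brace)
  show "finite (carrier (A\<lparr>carrier := Bs m\<rparr>))" "finite (carrier (A\<lparr>carrier := Bs n\<rparr>))"
    using finBs by simp_all
  show "card (carrier (A\<lparr>carrier := Bs m\<rparr>)) = m" "card (carrier (A\<lparr>carrier := Bs n\<rparr>)) = n"
    using card_Bm card_Bn by simp_all
  show "brace_action (A\<lparr>carrier := Bs m\<rparr>) (M\<lparr>carrier := Bs m\<rparr>) (M\<lparr>carrier := Bs n\<rparr>) lam"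
    by (rule action)
  show "brace_iso A M (sdp_add (A\<lparr>carrier := Bs m\<rparr>) (A\<lparr>carrier := Bs n\<rparr>))
     (sdp_mul (M\<lparr>carrier := Bs m\<rparr>) (M\<lparr>carrier := Bs n\<rparr>) lam) ff"
    unfolding brace_iso_def
  proof (intro conjI ballI)
    show "bij_betw ff (carrier A) (carrier (sdp_add (A\<lparr>carrier := Bs m\<rparr>) (A\<lparr>carrier := Bs n\<rparr>)))"
      using bij_ff by (simp add: sdp_add_def)
  next
    fix x y assume x: "x \<in> carrier A" and y: "y \<in> carrier A"
    show "ff (x \<otimes>\<^bsub>A\<^esub> y) = ff x \<otimes>\<^bsub>sdp_add (A\<lparr>carrier := Bs m\<rparr>) (A\<lparr>carrier := Bs n\<rparr>)\<^esub> ff y"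
      using x y by (simp add: sdp_add_def ff_def A.nat_pow_distrib)
    show "ff (x \<otimes>\<^bsub>M\<^esub> y) = ff x \<otimes>\<^bsub>sdp_mul (M\<lparr>carrier := Bs m\<rparr>) (M\<lparr>carrier := Bs n\<rparr>) lam\<^esub> ff y"
      using ff_mul[OF x y] by (simp add: sdp_mul_def ff_def)
  qed
qed

end
end

theorem mainTheorem1:
  fixes m n :: nat and A M :: "'a monoid"
  assumes "m > 0" and "n > 0" and "coprime m n"
    and hyp: "\<forall>G :: nat monoid. group G \<and> finite (carrier G) \<and> card (carrier G) = m * n
                 \<and> solvable G \<longrightarrow> (\<exists>N. N \<lhd> G \<and> card N = m)"
    and "is_brace A M" and "finite (carrier A)" and "card (carrier A) = m * n"
  shows "\<exists>(A1 :: 'a monoid) M1 (A2 :: 'a monoid) M2 \<tau> f.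
           is_brace A1 M1 \<and> finite (carrier A1) \<and> card (carrier A1) = m \<and>
           is_brace A2 M2 \<and> finite (carrier A2) \<and> card (carrier A2) = n \<and>
           brace_action A1 M1 M2 \<tau> \<and>
           brace_iso A M (sdp_add A1 A2) (sdp_mul M1 M2 \<tau>) f"
proof -
  interpret brace_fin A M m n
    using assms unfolding brace_fin_def brace_fin_axioms_def brace_loc_def by blast
  show ?thesis using result[OF hyp] .
qed

end
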